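(* A bipartite graph $G$ contains a repairable maximum stable set if and only if $G$ contains a perfect matching $M$ such that every edge of $M$ has an endpoint of degree one in $G$.
   Context: A maximum stable set is a stable set of maximum cardinality. A stable set $S$ of $G=(V,E)$ is repairable if for every $v\in S$ there exists $u\in V\setminus S$ such that $(S\setminus\{v\})\cup\{u\}$ is a stable set. *)

theory Defs
  imports Main
begin

definition graph :: "'a set \<Rightarrow> 'a set set \<Rightarrow> bool" where
  "graph V E \<longleftrightarrow> finite V \<and> (\<forall>e\<in>E. e \<subseteq> V \<and> card e = 2)"

definition bipartite :: "'a set \<Rightarrow> 'a set set \<Rightarrow> bool" where
  "bipartite V E \<longleftrightarrow> (\<exists>A B. A \<union> B = V \<and> A \<inter> B = {} \<and>
      (\<forall>e\<in>E. card (e \<inter> A) = 1 \<and> card (e \<inter> B) = 1))"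

definition degree :: "'a set set \<Rightarrow> 'a \<Rightarrow> nat" where
  "degree E v = card {e\<in>E. v \<in> e}"

definition stable_set :: "'a set \<Rightarrow> 'a set set \<Rightarrow> 'a set \<Rightarrow> bool" where
  "stable_set V E S \<longleftrightarrow> S \<subseteq> V \<and> (\<forall>e\<in>E. \<not> e \<subseteq> S)"

definition maximum_stable_set :: "'a set \<Rightarrow> 'a set set \<Rightarrow> 'a set \<Rightarrow> bool" where
  "maximum_stable_set V E S \<longleftrightarrow> stable_set V E S \<and>
      (\<forall>T. stable_set V E T \<longrightarrow> card T \<le> card S)"

definition repairable :: "'a set \<Rightarrow> 'a set set \<Rightarrow> 'a set \<Rightarrow> bool" where
  "repairable V E S \<longleftrightarrow> stable_set V E S \<and>
      (\<forall>v\<in>S. \<exists>u\<in>V - S. stable_set V E ((S - {v}) \<union> {u}))"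

definition perfect_matching :: "'a set \<Rightarrow> 'a set set \<Rightarrow> 'a set set \<Rightarrow> bool" where
  "perfect_matching V E M \<longleftrightarrow> M \<subseteq> E \<and>
      (\<forall>v\<in>V. \<exists>!e. e \<in> M \<and> v \<in> e)"

end

theory Submission
  imports Defs
begin

lemma card2_other:
  assumes "card e = 2" "x \<in> e"
  shows "\<exists>y. y \<noteq> x \<and> e = {x, y}"
proof -
  obtain a b where ab: "e = {a,b}" "a \<noteq> b" using assms(1) unfolding card_2_iff by blast
  show ?thesis
  proof (cases "x = a")
    case True
    then show ?thesis using ab by (intro exI[of _ b]) simp
  next
    case False
    then have "x = b" using assms(2) ab by simp
    then show ?thesis using ab by (intro exI[of _ a]) (simp add: insert_commute)
  qed
qed

lemma card2_pair:
  assumes "card e = 2" "x \<in> e" "y \<in> e" "x \<noteq> y"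
  shows "e = {x, y}"
proof -
  obtain a b where ab: "e = {a,b}" "a \<noteq> b" using assms(1) unfolding card_2_iff by blast
  have "x = a \<and> y = b \<or> x = b \<and> y = a" using assms(2-4) ab by auto
  then show ?thesis using ab by (auto simp: insert_commute)
qed

lemma leaf_unique:
  assumes "degree E l = 1" "e \<in> E" "l \<in> e" "e' \<in> E" "l \<in> e'"
  shows "e = e'"
proof -
  have "card {e\<in>E. l \<in> e} = 1" using assms(1) by (simp add: degree_def)
  then obtain e0 where e0: "{e\<in>E. l \<in> e} = {e0}" by (rule card_1_singletonE)
  have "e \<in> {e\<in>E. l \<in> e}" "e' \<in> {e\<in>E. l \<in> e}" using assms by simp_all
  then show ?thesis unfolding e0 by simp
qed

lemma dir2:
  assumes g: "graph V E" and pm: "perfect_matching V E M"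
    and lf: "\<forall>e\<in>M. \<exists>v\<in>e. degree E v = 1"
  shows "\<exists>S. maximum_stable_set V E S \<and> repairable V E S"
proof -
  have ME: "M \<subseteq> E" and uq: "\<And>v. v \<in> V \<Longrightarrow> \<exists>!e. e \<in> M \<and> v \<in> e"
    using pm by (auto simp: perfect_matching_def)
  have EV: "\<And>e. e \<in> E \<Longrightarrow> e \<subseteq> V" and E2: "\<And>e. e \<in> E \<Longrightarrow> card e = 2"
    and fV: "finite V" using g by (auto simp: graph_def)
  have uq2: "\<And>v e e'. e \<in> M \<Longrightarrow> e' \<in> M \<Longrightarrow> v \<in> e \<Longrightarrow> v \<in> e' \<Longrightarrow> e = e'"
    using uq ME EV by blast
  define gg where "gg e = (SOME v. v \<in> e \<and> degree E v = 1)" for e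
  have gg: "gg e \<in> e \<and> degree E (gg e) = 1" if eM: "e \<in> M" for e
  proof -
    have "\<exists>v. v \<in> e \<and> degree E v = 1" using lf eM by blast
    then show ?thesis unfolding gg_def by (rule someI_ex)
  qed
  have ggE: "\<And>e e'. e \<in> M \<Longrightarrow> e' \<in> E \<Longrightarrow> gg e \<in> e' \<Longrightarrow> e' = e"
  proof -
    fix e e' assume a: "e \<in> M" "e' \<in> E" "gg e \<in> e'"
    show "e' = e" using leaf_unique[of E "gg e" e' e] gg[OF a(1)] ME a by blast
  qed
  define S where "S = gg ` M"
  have "E \<subseteq> Pow V" using EV by blast
  moreover have "finite (Pow V)" using fV by simp
  ultimately have "finite E" by (rule finite_subset)
  then have fM: "finite M" using ME finite_subset by blast
  have SV: "S \<subseteq> V" using S_def gg ME EV by blast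
  have stS: "stable_set V E S"
    unfolding stable_set_def
  proof (intro conjI SV ballI notI)
    fix e assume e: "e \<in> E" "e \<subseteq> S"
    obtain a b where ab: "a \<noteq> b" "e = {a,b}" using E2[OF e(1)] by (auto simp: card_2_iff)
    obtain e1 e2 where "e1 \<in> M" "e2 \<in> M" "a = gg e1" "b = gg e2" using e ab S_def by auto
    then have "e = e1" "e = e2" using ggE[of e1 e] ggE[of e2 e] e(1) ab by auto
    then show False using ab \<open>a = gg e1\<close> \<open>b = gg e2\<close> by simp
  qed
  have injg: "inj_on gg M"
  proof (rule inj_onI)
    fix e1 e2 assume a: "e1 \<in> M" "e2 \<in> M" "gg e1 = gg e2"
    show "e1 = e2" using uq2[OF a(1) a(2), of "gg e1"] gg[OF a(1)] gg[OF a(2)] a(3) by simp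
  qed
  have cS: "card S = card M" using S_def injg card_image by blast
  have maxS: "maximum_stable_set V E S"
    unfolding maximum_stable_set_def
  proof (intro conjI stS allI impI)
    fix T assume T: "stable_set V E T"
    then have TV: "T \<subseteq> V" by (simp add: stable_set_def)
    define h where "h x = (THE e. e \<in> M \<and> x \<in> e)" for x
    have h: "h x \<in> M \<and> x \<in> h x" if x: "x \<in> T" for x
    proof -
      have "\<exists>!e. e \<in> M \<and> x \<in> e" using uq TV x by blast
      then show ?thesis unfolding h_def by (rule theI')
    qed
    have "inj_on h T"
    proof (rule inj_onI, rule ccontr)
      fix x y assume xy: "x \<in> T" "y \<in> T" "h x = h y" "x \<noteq> y"
      have hx: "h x \<in> M" "x \<in> h x" using h[OF xy(1)] by auto
      have hy: "y \<in> h x" using h[OF xy(2)] xy(3) by simp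
      have hE: "h x \<in> E" using hx ME by blast
      have "h x = {x,y}" using card2_pair[OF E2[OF hE] hx(2) hy xy(4)] .
      then have "h x \<subseteq> T" using xy by simp
      then show False using T hE unfolding stable_set_def by blast
    qed
    moreover have "h ` T \<subseteq> M" using h by auto
    ultimately have "card T \<le> card M" using fM card_inj_on_le by blast
    then show "card T \<le> card S" using cS by simp
  qed
  have "repairable V E S"
    unfolding repairable_def
  proof (intro conjI stS ballI)
    fix v assume "v \<in> S"
    then obtain e where e: "e \<in> M" "v = gg e" using S_def by auto
    have eE: "e \<in> E" using e ME by blast
    have ve: "v \<in> e" using gg[OF e(1)] e(2) by simp
    obtain u where u: "u \<noteq> v" "e = {v,u}" using card2_other[OF E2[OF eE] ve] by blast
    have uV: "u \<in> V" using u e ME EV by blast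
    have uS: "u \<notin> S"
    proof
      assume "u \<in> S"
      then obtain e' where e': "e' \<in> M" "u = gg e'" using S_def by auto
      have "u \<in> e'" using gg[OF e'(1)] e'(2) by simp
      moreover have "u \<in> e" using u by simp
      ultimately have "e' = e" using uq2[OF e'(1) e(1)] by blast
      then show False using e'(2) e(2) u(1) by simp
    qed
    have "stable_set V E ((S - {v}) \<union> {u})"
      unfolding stable_set_def
    proof (intro conjI ballI notI)
      show "S - {v} \<union> {u} \<subseteq> V" using SV uV by auto
    next
      fix e' assume e': "e' \<in> E" "e' \<subseteq> S - {v} \<union> {u}"
      show False
      proof (cases "u \<in> e'")
        case False
        then show False using e' stS by (auto simp: stable_set_def)
      next
        case True
        then obtain w where w: "w \<noteq> u" "e' = {u,w}" using card2_other[OF E2[OF e'(1)]] by blast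
        then have "w \<in> S - {v}" using e' by auto
        then obtain e'' where e'': "e'' \<in> M" "w = gg e''" "w \<noteq> v" using S_def by auto
        then have "e' = e''" using ggE[OF e''(1) e'(1)] w by simp
        then have "u \<in> e''" using w by blast
        then have "e'' = e" using uq2[OF e''(1) e(1)] u by simp
        then show False using e'' e by simp
      qed
    qed
    then show "\<exists>u\<in>V - S. stable_set V E (S - {v} \<union> {u})" using uV uS by blast
  qed
  then show ?thesis using maxS by blast
qed



lemma dir1:
  assumes g: "graph V E" and bp: "bipartite V E"
    and mx: "maximum_stable_set V E S" and rp: "repairable V E S"
  shows "\<exists>M. perfect_matching V E M \<and> (\<forall>e\<in>M. \<exists>v\<in>e. degree E v = 1)"
proof -
  have EV: "\<And>e. e \<in> E \<Longrightarrow> e \<subseteq> V" and E2: "\<And>e. e \<in> E \<Longrightarrow> card e = 2"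
    and fV: "finite V" using g by (auto simp: graph_def)
  have stS: "stable_set V E S" and maxS: "\<And>T. stable_set V E T \<Longrightarrow> card T \<le> card S"
    using mx by (auto simp: maximum_stable_set_def)
  have SV: "S \<subseteq> V" using stS by (simp add: stable_set_def)
  have fS: "finite S" using SV fV finite_subset by blast
  define f where "f v = (SOME u. u \<in> V - S \<and> stable_set V E ((S - {v}) \<union> {u}))" for v
  have f1: "f v \<in> V - S \<and> stable_set V E ((S - {v}) \<union> {f v})" if v: "v \<in> S" for v
  proof -
    have "\<exists>u. u \<in> V - S \<and> stable_set V E ((S - {v}) \<union> {u})"
      using rp v unfolding repairable_def by blast
    then show ?thesis unfolding f_def by (rule someI_ex)
  qed
  have K: "\<And>v e w. v \<in> S \<Longrightarrow> e \<in> E \<Longrightarrow> f v \<in> e \<Longrightarrow> w \<in> e \<Longrightarrow> w \<in> S \<Longrightarrow> w = v"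
  proof (rule ccontr)
    fix v e w assume a: "v \<in> S" "e \<in> E" "f v \<in> e" "w \<in> e" "w \<in> S" "w \<noteq> v"
    have "f v \<noteq> w" using f1 a by auto
    then have "e = {f v, w}" using card2_pair[OF E2[OF a(2)] a(3) a(4)] by blast
    then have "e \<subseteq> (S - {v}) \<union> {f v}" using a by auto
    then show False using f1[OF a(1)] a(2) by (auto simp: stable_set_def)
  qed
  have Ex: "\<And>v. v \<in> S \<Longrightarrow> {v, f v} \<in> E"
  proof (rule ccontr)
    fix v assume v: "v \<in> S" "{v, f v} \<notin> E"
    have fv: "f v \<in> V" "f v \<notin> S" using f1 v by auto
    have "stable_set V E (insert (f v) S)"
      unfolding stable_set_def
    proof (intro conjI ballI notI)
      show "insert (f v) S \<subseteq> V" using SV fv by auto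
    next
      fix e assume e: "e \<in> E" "e \<subseteq> insert (f v) S"
      show False
      proof (cases "f v \<in> e")
        case False
        then show False using e stS by (auto simp: stable_set_def)
      next
        case True
        then obtain w where w: "w \<noteq> f v" "e = {f v, w}" using card2_other[OF E2[OF e(1)]] by blast
        then have "w \<in> S" using e by auto
        then have "w = v" using K v e True w by blast
        then show False using v e w by (simp add: insert_commute)
      qed
    qed
    then have "card (insert (f v) S) \<le> card S" using maxS by blast
    then show False using fS fv by simp
  qed
  have injf: "inj_on f S"
  proof (rule inj_onI)
    fix v v' assume "v \<in> S" "v' \<in> S" "f v = f v'"
    then show "v = v'" using K[of v "{v', f v'}" v'] Ex by auto
  qed
  obtain A B where AB: "A \<union> B = V" "A \<inter> B = {}" "\<forall>e\<in>E. card (e \<inter> A) = 1 \<and> card (e \<inter> B) = 1"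
    using bp by (auto simp: bipartite_def)
  have stA: "stable_set V E A" unfolding stable_set_def
  proof (intro conjI ballI notI)
    show "A \<subseteq> V" using AB by auto
  next
    fix e assume e: "e \<in> E" "e \<subseteq> A"
    then have "e \<inter> A = e" by blast
    moreover have "card (e \<inter> A) = 1" using AB(3) e(1) by blast
    ultimately show False using E2[OF e(1)] by simp
  qed
  have stB: "stable_set V E B" unfolding stable_set_def
  proof (intro conjI ballI notI)
    show "B \<subseteq> V" using AB by auto
  next
    fix e assume e: "e \<in> E" "e \<subseteq> B"
    then have "e \<inter> B = e" by blast
    moreover have "card (e \<inter> B) = 1" using AB(3) e(1) by blast
    ultimately show False using E2[OF e(1)] by simp
  qed
  have "card V = card A + card B" using AB fV
  proof -
    have "finite A" "finite B" using AB(1) fV by (auto intro: finite_subset)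
    then show ?thesis using card_Un_disjoint[of A B] AB(1,2) by simp
  qed
  then have cV: "card V \<le> 2 * card S" using maxS[OF stA] maxS[OF stB] by simp
  have fT: "f ` S \<subseteq> V - S" using f1 by auto
  have cT: "card (V - S) = card V - card S" using fS SV card_Diff_subset by blast
  have "card (f ` S) = card S" using injf card_image by blast
  then have le: "card (V - S) \<le> card (f ` S)" using cT cV by simp
  have fST: "f ` S = V - S" using card_seteq[OF _ fT le] fV by simp
  define M where "M = (\<lambda>v. {v, f v}) ` S"
  have deg: "\<And>v. v \<in> S \<Longrightarrow> degree E v = 1"
  proof -
    fix v assume v: "v \<in> S"
    have "{e\<in>E. v \<in> e} = {{v, f v}}"
    proof (intro equalityI subsetI)
      fix e assume e: "e \<in> {e\<in>E. v \<in> e}"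
      then have eE: "e \<in> E" and ve: "v \<in> e" by auto
      obtain w where w: "w \<noteq> v" "e = {v, w}" using card2_other[OF E2[OF eE] ve] by blast
      have "w \<notin> S"
      proof
        assume "w \<in> S"
        then have "e \<subseteq> S" using w v by simp
        then show False using stS eE by (simp add: stable_set_def)
      qed
      moreover have "w \<in> V" using EV[OF eE] w by blast
      ultimately obtain v' where v': "v' \<in> S" "w = f v'" using fST by blast
      then have "v = v'" using K[of v' e v] eE w v by simp
      then show "e \<in> {{v, f v}}" using w v' by simp
    next
      fix e assume "e \<in> {{v, f v}}"
      then show "e \<in> {e\<in>E. v \<in> e}" using Ex v by auto
    qed
    then show "degree E v = 1" by (simp add: degree_def)
  qed
  have "perfect_matching V E M"
    unfolding perfect_matching_def
  proof (intro conjI ballI)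
    show "M \<subseteq> E" using M_def Ex by auto
  next
    fix x assume x: "x \<in> V"
    have ex: "\<exists>e. e \<in> M \<and> x \<in> e"
    proof (cases "x \<in> S")
      case True then show ?thesis using M_def by blast
    next
      case False
      then obtain v where "v \<in> S" "x = f v" using fST x by blast
      then show ?thesis using M_def by blast
    qed
    have un: "e1 = e2" if h: "e1 \<in> M" "x \<in> e1" "e2 \<in> M" "x \<in> e2" for e1 e2
    proof -
      obtain v1 where v1: "v1 \<in> S" "e1 = {v1, f v1}" using h M_def by blast
      obtain v2 where v2: "v2 \<in> S" "e2 = {v2, f v2}" using h M_def by blast
      have n1: "f v1 \<notin> S" and n2: "f v2 \<notin> S" using f1 v1 v2 by auto
      have "v1 = v2"
      proof (cases "x \<in> S")
        case True
        then show ?thesis using h v1 v2 n1 n2 by auto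
      next
        case False
        then have "x = f v1" "x = f v2" using h v1 v2 by auto
        then show ?thesis using inj_onD[OF injf _ v1(1) v2(1)] by simp
      qed
      then show ?thesis using v1 v2 by simp
    qed
    show "\<exists>!e. e \<in> M \<and> x \<in> e" using ex un by blast
  qed
  moreover have "\<forall>e\<in>M. \<exists>v\<in>e. degree E v = 1" using M_def deg by auto
  ultimately show ?thesis by blast
qed

theorem lemma3:
  fixes V :: "'a set" and E :: "'a set set"
  assumes "graph V E" and "bipartite V E"
  shows "(\<exists>S. maximum_stable_set V E S \<and> repairable V E S) \<longleftrightarrow>
         (\<exists>M. perfect_matching V E M \<and> (\<forall>e\<in>M. \<exists>v\<in>e. degree E v = 1))"
proof
  assume "\<exists>S. maximum_stable_set V E S \<and> repairable V E S"
  then obtain S where "maximum_stable_set V E S" "repairable V E S" by blast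
  then show "\<exists>M. perfect_matching V E M \<and> (\<forall>e\<in>M. \<exists>v\<in>e. degree E v = 1)"
    by (rule dir1[OF assms])
next
  assume "\<exists>M. perfect_matching V E M \<and> (\<forall>e\<in>M. \<exists>v\<in>e. degree E v = 1)"
  then obtain M where "perfect_matching V E M" "\<forall>e\<in>M. \<exists>v\<in>e. degree E v = 1" by blast
  then show "\<exists>S. maximum_stable_set V E S \<and> repairable V E S"
    by (rule dir2[OF assms(1)])
qed

end
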